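(* Let $h_{r+1}(z)={}_2F_1(-r,r+1;2r+2;1-z)$. For each fixed $z\in(0,1)$, as $r\to\infty$, $$h_{r+1}(z)=[\rho(z)]^r\,C(z)\,\big(1+O(r^{-1})\big),$$ where $$\rho(z)=4\,\frac{(1-2z)(2-z)(1+z)+2(1-z+z^2)^{3/2}}{27(1-z)^2},\qquad C(z)=\frac{2z}{\sqrt{2(1-z+z^2)^2-(2-z)(1-2z)(1+z)\sqrt{1-z+z^2}}}.$$
   Context: $h_{r+1}(z)$ is the generating function $\sum_{k=1}^{r+1}H_{r+1}^{(k)}z^{k-1}$ of the refined alternating-sign-matrix enumeration, $H_{N}^{(k)}=\binom{N+k-2}{N-1}\binom{2N-1-k}{N-1}/\binom{3N-2}{N-1}$, equivalently ${}_2F_1(-N+1,N;2N;1-z)$ with $N=r+1$. *)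

theory Defs
  imports "HOL-Analysis.Analysis" "HOL-Library.Landau_Symbols"
begin

definition hyp2F1_term :: "nat \<Rightarrow> real \<Rightarrow> real \<Rightarrow> real \<Rightarrow> real" where
  "hyp2F1_term n b c x =
     (\<Sum>k\<le>n. pochhammer (- real n) k * pochhammer b k / (pochhammer c k * fact k) * x ^ k)"

text \<open>h_{r+1}(z) = 2F1(-r, r+1; 2r+2; 1-z).\<close>
definition h :: "nat \<Rightarrow> real \<Rightarrow> real" where
  "h r z = hyp2F1_term r (real r + 1) (2 * real r + 2) (1 - z)"

definition rho :: "real \<Rightarrow> real" where
  "rho z = 4 * ((1 - 2*z) * (2 - z) * (1 + z) + 2 * (1 - z + z^2) powr (3/2)) / (27 * (1 - z)^2)"

definition Cconst :: "real \<Rightarrow> real" where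
  "Cconst z = 2 * z / sqrt (2 * (1 - z + z^2)^2 - (2 - z) * (1 - 2*z) * (1 + z) * sqrt (1 - z + z^2))"

end

theory Submission
  imports Defs
begin

lemma beta_nat:
  "((\<lambda>t::real. t^m * (1-t)^n) has_integral (fact m * fact n / fact (m+n+1))) {0..1}"
proof -
  have B: "((\<lambda>t. t powr (real m + 1 - 1) * (1 - t) powr (real n + 1 - 1)) has_integral
        Beta (real m + 1) (real n + 1)) {0..1}"
    by (rule has_integral_Beta_real) auto
  have e: "Beta (real m + 1) (real n + 1) = fact m * fact n / fact (m+n+1)"
  proof -
    have g1: "Gamma (real m + 1) = fact m" using Gamma_fact[of m, where 'a=real] by (simp add: add.commute)
    have g2: "Gamma (real n + 1) = fact n" using Gamma_fact[of n, where 'a=real] by (simp add: add.commute)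
    have g3: "Gamma (real m + 1 + (real n + 1)) = fact (m+n+1)"
      using Gamma_fact[of "m+n+1", where 'a=real] by (simp add: add_ac)
    show ?thesis unfolding Beta_def g1 g2 g3 ..
  qed
  have "((\<lambda>t::real. t^m * (1-t)^n) has_integral Beta (real m + 1) (real n + 1)) {0..1}"
  proof (rule has_integral_spike_finite[OF _ _ B])
    show "finite {0::real,1}" by simp
    fix t :: real assume "t \<in> {0..1} - {0,1}"
    then have "0 < t" "0 < 1 - t" by auto
    then show "t^m * (1-t)^n = t powr (real m + 1 - 1) * (1 - t) powr (real n + 1 - 1)"
      by (simp add: powr_realpow)
  qed
  then show ?thesis using e by simp
qed

lemma IJ_rel:
  fixes r :: nat
  shows "((\<lambda>v::real. (1 - v^2)^r - (2*real r+3) * (v^2 * (1-v^2)^r)) has_integral 0) {-1..1}"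
proof -
  have "((\<lambda>v::real. (1 - v^2)^r - (2*real r+3) * (v^2 * (1-v^2)^r)) has_integral
        ((\<lambda>v. v * (1-v^2)^(Suc r)) 1 - (\<lambda>v. v * (1-v^2)^(Suc r)) (-1))) {-1..1}"
  proof (rule fundamental_theorem_of_calculus)
    fix x :: real assume "x \<in> {-1..1}"
    show "((\<lambda>v. v * (1-v^2)^(Suc r)) has_vector_derivative
      ((1 - x^2)^r - (2*real r+3) * (x^2 * (1-x^2)^r))) (at x within {-1..1})"
      unfolding has_real_derivative_iff_has_vector_derivative[symmetric]
      by (rule derivative_eq_intros refl | simp)+ (simp add: algebra_simps power2_eq_square)
  qed simp
  then show ?thesis by simp
qed

lemma odd_int:
  fixes r :: nat
  shows "((\<lambda>v::real. (1 - v^2)^r * v) has_integral 0) {-1..1}"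
proof -
  have "((\<lambda>v::real. (1 - v^2)^r * v) has_integral
        ((\<lambda>v. (1-v^2)^(Suc r) * (-1/(2*(real r+1)))) 1 - (\<lambda>v. (1-v^2)^(Suc r) * (-1/(2*(real r+1)))) (-1))) {-1..1}"
  proof (rule fundamental_theorem_of_calculus)
    fix x :: real assume "x \<in> {-1..1}"
    show "((\<lambda>v. (1-v^2)^(Suc r) * (-1/(2*(real r+1)))) has_vector_derivative
      ((1 - x^2)^r * x)) (at x within {-1..1})"
      unfolding has_real_derivative_iff_has_vector_derivative[symmetric]
      by (rule derivative_eq_intros refl | simp)+ (simp add: field_simps power2_eq_square)
  qed simp
  then show ?thesis by simp
qed

lemma poch_nat: "pochhammer (real m + 1) k * fact m = (fact (m+k) :: real)"
proof (induction k)
  case 0 then show ?case by simp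
next
  case (Suc k)
  have "pochhammer (real m + 1) (Suc k) * fact m = (pochhammer (real m + 1) k * fact m) * (real m + 1 + real k)"
    by (simp add: pochhammer_Suc algebra_simps)
  also have "\<dots> = fact (m+k) * (real (m + k) + 1)" using Suc by simp
  also have "\<dots> = fact (m + Suc k)" by (simp add: algebra_simps)
  finally show ?case .
qed

lemma term_eq:
  fixes r k :: nat and x :: real
  assumes "k \<le> r"
  shows "pochhammer (- real r) k * pochhammer (real r + 1) k / (pochhammer (2 * real r + 2) k * fact k) * x ^ k
    = fact (2*r+1) / (fact r)^2 * (real (r choose k) * (-x)^k * (fact (r+k) * fact r / fact (r+k+r+1)))"
proof -
  have p1: "pochhammer (- real r) k = (-1)^k * (fact r / fact (r-k))"
  proof -
    have "pochhammer (- real r) k = (-1)^k * pochhammer (real r - real k + 1) k"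
      by (rule pochhammer_minus)
    also have "real r - real k = real (r - k)" using assms by simp
    also have "pochhammer (real (r-k) + 1) k = fact r / fact (r-k)"
      using poch_nat[of "r-k" k] assms by (simp add: field_simps)
    finally show ?thesis .
  qed
  have p2: "pochhammer (real r + 1) k = fact (r+k) / fact r"
    using poch_nat[of r k] by (simp add: field_simps)
  have q: "pochhammer (2 * real r + 2) k * fact (2*r+1) = fact (2*r+1+k)"
  proof -
    have eq: "real (2*r+1) + 1 = 2 * real r + 2" by simp
    from poch_nat[of "2*r+1" k] show ?thesis by (simp only: eq)
  qed
  have p3: "pochhammer (2 * real r + 2) k = fact (2*r+1+k) / fact (2*r+1)"
    using q by (simp add: eq_divide_eq del: fact_Suc)
  have b: "real (r choose k) = fact r / (fact k * fact (r-k))"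
    using binomial_fact[OF assms] by simp
  have e: "r+k+r+1 = 2*r+1+k" by simp
  have alg: "\<And>A B Cf D E K s y::real. A\<noteq>0 \<Longrightarrow> B\<noteq>0 \<Longrightarrow> E\<noteq>0 \<Longrightarrow> D\<noteq>0 \<Longrightarrow> K\<noteq>0 \<Longrightarrow>
     s*(A/B) * (Cf/A) / ((E/D) * K) * y = D/A^2 * ((A/(K*B)) * (s*y) * (Cf*A/E))"
    by (simp add: field_simps power2_eq_square)
  have m: "(-x)^k = (-1)^k * x^k" by (rule power_minus)
  show ?thesis unfolding p1 p2 p3 b e m
    by (rule alg) auto
qed

lemma hyp_integral:
  fixes r :: nat and x :: real
  shows "hyp2F1_term r (real r + 1) (2 * real r + 2) x
     = fact (2*r+1) / (fact r)^2 * integral {0..1} (\<lambda>t. (t*(1-t)*(1-x*t))^r)"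
proof -
  have expand: "(t*(1-t)*(1-x*t))^r = (\<Sum>k\<le>r. (real (r choose k) * (-x)^k) * (t^(r+k) * (1-t)^r))"
    for t :: real
  proof -
    have "(1 - x*t)^r = ((-x*t) + 1)^r" by simp
    also have "\<dots> = (\<Sum>k\<le>r. real (r choose k) * (-x*t)^k * 1^(r-k))"
      by (rule binomial_ring)
    also have "\<dots> = (\<Sum>k\<le>r. real (r choose k) * (-x)^k * t^k)"
      unfolding power_mult_distrib by (simp add: mult.assoc)
    finally have "(1 - x*t)^r = (\<Sum>k\<le>r. real (r choose k) * (-x)^k * t^k)" .
    then have "(t*(1-t)*(1-x*t))^r = t^r * (1-t)^r * (\<Sum>k\<le>r. real (r choose k) * (-x)^k * t^k)"
      by (simp add: power_mult_distrib)
    also have "\<dots> = (\<Sum>k\<le>r. (real (r choose k) * (-x)^k) * (t^(r+k) * (1-t)^r))"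
      by (simp add: sum_distrib_left power_add algebra_simps)
    finally show ?thesis .
  qed
  have hi: "((\<lambda>t. (t*(1-t)*(1-x*t))^r) has_integral
      (\<Sum>k\<le>r. (real (r choose k) * (-x)^k) * (fact (r+k) * fact r / fact (r+k+r+1)))) {0..1}"
    unfolding expand
    by (intro has_integral_sum finite_atMost has_integral_mult_right beta_nat)
  have "hyp2F1_term r (real r + 1) (2 * real r + 2) x =
     (\<Sum>k\<le>r. fact (2*r+1) / (fact r)^2 * (real (r choose k) * (-x)^k * (fact (r+k) * fact r / fact (r+k+r+1))))"
    unfolding hyp2F1_term_def by (intro sum.cong refl term_eq) auto
  also have "\<dots> = fact (2*r+1) / (fact r)^2 * integral {0..1} (\<lambda>t. (t*(1-t)*(1-x*t))^r)"
    using integral_unique[OF hi] by (simp add: sum_distrib_left mult.assoc)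
  finally show ?thesis .
qed

lemma decomp_alg:
  fixes x \<sigma> k :: real
  assumes "0 < \<sigma>" "0 < k" "0 < x" "k*(3*x^2-\<sigma>^2) \<noteq> 0"
  shows "2*x = (1/(k*\<sigma>) + (-1/(k^2*\<sigma>^4))*(k*x*(x^2-\<sigma>^2)))*(k*(3*x^2-\<sigma>^2))
     + (k*x*(x^2-\<sigma>^2))^2*(k*(3*x^2-\<sigma>^2))*
     ((15*\<sigma>^3 + 26*\<sigma>^2*(x-\<sigma>) + 15*\<sigma>*(x-\<sigma>)^2 + 3*(x-\<sigma>)^3) /
    (\<sigma>^4*k^2*x^2*(x+\<sigma>)^2*(k*(3*x^2-\<sigma>^2))))"
proof -
  let ?R = "15*\<sigma>^3 + 26*\<sigma>^2*(x-\<sigma>) + 15*\<sigma>*(x-\<sigma>)^2 + 3*(x-\<sigma>)^3"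
  have s1: "1/(k*\<sigma>) + (-1/(k^2*\<sigma>^4))*(k*x*(x^2-\<sigma>^2)) = (\<sigma>^3 - x*(x^2-\<sigma>^2))/(k*\<sigma>^4)"
    using assms by (simp add: field_simps power2_eq_square power4_eq_xxxx power3_eq_cube)
  have s2: "2*x*\<sigma>^4 - (\<sigma>^3 - x*(x^2-\<sigma>^2))*(3*x^2-\<sigma>^2) = (x-\<sigma>)^2 * ?R"
    by (simp add: power2_eq_square power4_eq_xxxx power3_eq_cube algebra_simps)
  have xs: "x + \<sigma> \<noteq> 0" using assms by simp
  have s3: "(k*x*(x^2-\<sigma>^2))^2*(k*(3*x^2-\<sigma>^2))*(?R / (\<sigma>^4*k^2*x^2*(x+\<sigma>)^2*(k*(3*x^2-\<sigma>^2))))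
     = (x-\<sigma>)^2 * ?R / \<sigma>^4"
  proof -
    have e: "(k*x*(x^2-\<sigma>^2))^2 = k^2*x^2*(x+\<sigma>)^2*(x-\<sigma>)^2"
      by (simp add: power2_eq_square algebra_simps)
    have ab: "\<And>K2 X2 P2 U2 Wp R S4::real. K2 \<noteq> 0 \<Longrightarrow> X2 \<noteq> 0 \<Longrightarrow> P2 \<noteq> 0 \<Longrightarrow> Wp \<noteq> 0 \<Longrightarrow> S4 \<noteq> 0 \<Longrightarrow>
       (K2*X2*P2*U2)*Wp*(R/(S4*K2*X2*P2*Wp)) = U2*R/S4"
      by (simp add: field_simps)
    show ?thesis unfolding e by (rule ab) (use assms xs in auto)
  qed
  have s4: "(\<sigma>^3 - x*(x^2-\<sigma>^2))/(k*\<sigma>^4) * (k*(3*x^2-\<sigma>^2)) = (\<sigma>^3 - x*(x^2-\<sigma>^2))*(3*x^2-\<sigma>^2)/\<sigma>^4"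
    using assms by simp
  have s5: "\<And>P::real. 2*x = P/\<sigma>^4 + (2*x*\<sigma>^4 - P)/\<sigma>^4"
    using assms by (simp add: field_simps)
  show ?thesis unfolding s1 s3 s4 s2[symmetric] by (rule s5)
qed

definition "Iint r = integral {-1..1} (\<lambda>v::real. (1-v^2)^r)"
definition "Jint r = integral {-1..1} (\<lambda>v::real. v^2*(1-v^2)^r)"

lemma I_has: "((\<lambda>v::real. (1-v^2)^r) has_integral Iint r) {-1..1}"
  unfolding Iint_def by (intro integrable_integral integrable_continuous_real continuous_intros)
lemma J_has: "((\<lambda>v::real. v^2*(1-v^2)^r) has_integral Jint r) {-1..1}"
  unfolding Jint_def by (intro integrable_integral integrable_continuous_real continuous_intros)

lemma IJ: "Iint r = (2*real r+3) * Jint r"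
proof -
  have "((\<lambda>v::real. (1 - v^2)^r - (2*real r+3) * (v^2 * (1-v^2)^r)) has_integral
     (Iint r - (2*real r+3) * Jint r)) {-1..1}"
    by (intro has_integral_diff I_has has_integral_mult_right J_has)
  with IJ_rel[of r] have "Iint r - (2*real r+3) * Jint r = 0" using has_integral_unique by blast
  then show ?thesis by simp
qed

lemma I_formula: "Iint r = 2*4^r*((fact r)^2/fact(2*r+1))"
proof -
  have im: "(\<lambda>t::real. 2*t-1) ` {0..1} \<subseteq> {-1..1}" by auto
  have co: "continuous_on {-1..1} (\<lambda>v::real. (1-v^2)^r)" by (intro continuous_intros)
  have de: "\<And>x. x \<in> {0..1} \<Longrightarrow> ((\<lambda>t::real. 2*t-1) has_field_derivative 2) (at x within {0..1})"
    by (rule derivative_eq_intros refl | simp)+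
  have sub: "((\<lambda>t. 2 *\<^sub>R (\<lambda>v::real. (1-v^2)^r) (2*t-1)) has_integral
      integral {(\<lambda>t::real. 2*t-1) 0..(\<lambda>t. 2*t-1) 1} (\<lambda>v::real. (1-v^2)^r)) {0..1}"
    by (rule has_integral_substitution[OF _ _ im co de]) simp_all
  have e: "2 *\<^sub>R (\<lambda>v::real. (1-v^2)^r) (2*t-1) = 2*4^r * (t^r*(1-t)^r)" for t :: real
  proof -
    have "1 - (2*t-1)^2 = 4*(t*(1-t))" by (simp add: power2_eq_square algebra_simps)
    then show ?thesis by (simp add: power_mult_distrib)
  qed
  have s1: "((\<lambda>t. 2*4^r * (t^r*(1-t)^r)) has_integral Iint r) {0..1}"
    using sub unfolding e Iint_def by simp
  have rr: "r+r+1 = 2*r+1" by simp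
  have s2: "((\<lambda>t::real. 2*4^r * (t^r*(1-t)^r)) has_integral 2*4^r*(fact r * fact r / fact (2*r+1))) {0..1}"
    using has_integral_mult_right[OF beta_nat[of r r], of "2*4^r"] unfolding rr .
  have "Iint r = 2*4^r*(fact r * fact r / fact (2*r+1))"
    using has_integral_unique[OF s1 s2] .
  then show ?thesis by (simp only: power2_eq_square)
qed

lemma I_pos: "0 < Iint r" unfolding I_formula by simp

locale lap =
  fixes z :: real
  assumes z0: "0 < z" and z1: "z < 1"
begin

definition "a = 1 - z"
definition "Dl = 1 - a + a^2"
definition "rD = sqrt Dl"
definition "t0 = ((1+a) - rD) / (3*a)"
definition "t1 = (1+a)/a - 2*t0"
definition "d = t1 - t0"
definition "\<sigma> = sqrt d"
definition "ff t = t*(1-t)*(1-a*t)"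
definition "f0 = ff t0"
definition "k = sqrt (a/f0)"
definition "xlo = sqrt (t1 - 1)"
definition "xhi = sqrt t1"
definition "W x = k*x*(x^2-d)"
definition "W' x = k*(3*x^2-d)"
definition "c0 = 1/(k*\<sigma>)"
definition "c1 = -1/(k^2*\<sigma>^4)"
definition "Q x = (15*\<sigma>^3 + 26*\<sigma>^2*(x-\<sigma>) + 15*\<sigma>*(x-\<sigma>)^2 + 3*(x-\<sigma>)^3) /
    (\<sigma>^4*k^2*x^2*(x+\<sigma>)^2*W' x)"

lemma a_pos: "0 < a" and a_lt1: "a < 1" using z0 z1 unfolding a_def by auto

lemma Dl_pos: "0 < Dl"
  unfolding Dl_def using a_pos a_lt1 by (simp add: add_pos_nonneg)

lemma rD_pos: "0 < rD" and rD_sq: "rD^2 = Dl"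
  using Dl_pos unfolding rD_def by auto

lemma d_eq: "d = rD / a"
  unfolding d_def t1_def t0_def using a_pos by (simp add: field_simps)

lemma d_pos: "0 < d" using d_eq rD_pos a_pos by simp

lemma rD_lt: "rD < 1 + a"
proof -
  have "rD^2 < (1+a)^2" using rD_sq a_pos unfolding Dl_def by (simp add: power2_eq_square algebra_simps)
  then show ?thesis using rD_pos a_pos by (smt (verit) power_mono)
qed

lemma rD_gt: "\<bar>2*a - 1\<bar> < rD"
proof -
  have "a*a < a*1" using mult_strict_left_mono[OF a_lt1 a_pos] .
  then have "(2*a-1)^2 < Dl" unfolding Dl_def by (simp add: power2_eq_square algebra_simps)
  then have "sqrt ((2*a-1)^2) < sqrt Dl" by (rule real_sqrt_less_mono)
  then show ?thesis unfolding rD_def by simp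
qed

lemma t0_pos: "0 < t0" unfolding t0_def using rD_lt a_pos by simp
lemma t0_lt1: "t0 < 1" unfolding t0_def using rD_gt a_pos by (simp add: field_simps abs_less_iff)
lemma t1_eq: "t1 = (1 + a + 2*rD)/(3*a)" unfolding t1_def t0_def using a_pos by (simp add: field_simps)
lemma t1_gt1: "1 < t1" unfolding t1_eq using a_pos a_lt1 rD_pos rD_gt
  by (simp add: field_simps abs_less_iff)

lemma crit: "3*a*t0^2 - 2*(1+a)*t0 + 1 = 0"
  unfolding t0_def using a_pos rD_sq unfolding Dl_def
  by (simp add: field_simps power2_eq_square) algebra

lemma ff_poly: "ff t - f0 = a*(t-t0)^2*(t-t1)"
proof -
  have "ff t - f0 - a*(t-t0)^2*(t-t1) = (t - t0) * (3*a*t0^2 - 2*(1+a)*t0 + 1)"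
    unfolding ff_def f0_def t1_def using a_pos by (simp add: field_simps power2_eq_square)
  then show ?thesis using crit by simp
qed

lemma f0_pos: "0 < f0"
proof -
  have "a*t0 < a*1" using mult_strict_left_mono[OF t0_lt1 a_pos] .
  then show ?thesis unfolding f0_def ff_def using t0_pos t0_lt1 a_lt1
    by (intro mult_pos_pos) auto
qed


lemma f0_t1: "a*t1*t0^2 = f0" using ff_poly[of 0] by (simp add: ff_def algebra_simps)
lemma f0_1: "a*(1-t0)^2*(t1-1) = f0" using ff_poly[of 1] by (simp add: ff_def algebra_simps power2_eq_square)

lemma k_pos: "0 < k" unfolding k_def using a_pos f0_pos by simp
lemma k_sq: "k^2 = a/f0" unfolding k_def using a_pos f0_pos by simp
lemma sig_pos: "0 < \<sigma>" unfolding \<sigma>_def using d_pos by simp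
lemma sig_sq: "\<sigma>^2 = d" unfolding \<sigma>_def using d_pos by simp
lemma xlo_pos: "0 < xlo" unfolding xlo_def using t1_gt1 by simp
lemma xlo_sq: "xlo^2 = t1 - 1" unfolding xlo_def using t1_gt1 by simp
lemma xhi_pos: "0 < xhi" unfolding xhi_def using t1_gt1 by simp
lemma xhi_sq: "xhi^2 = t1" unfolding xhi_def using t1_gt1 by simp

lemma W_shi: "W xhi = 1"
proof -
  have e: "W xhi = k*xhi*t0" unfolding W_def xhi_sq d_def by simp
  have "(k*xhi*t0)^2 = k^2 * xhi^2 * t0^2" by (simp add: power_mult_distrib)
  also have "\<dots> = 1" unfolding k_sq xhi_sq using f0_t1 f0_pos by (simp add: field_simps)
  finally have "(k*xhi*t0)^2 = 1" .
  moreover have "0 < k*xhi*t0" using k_pos xhi_pos t0_pos by simp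
  ultimately show ?thesis unfolding e using power2_eq_1_iff by fastforce
qed

lemma W_slo: "W xlo = -1"
proof -
  have e: "W xlo = - (k*xlo*(1-t0))" unfolding W_def xlo_sq d_def by (simp add: algebra_simps)
  have "(k*xlo*(1-t0))^2 = k^2 * xlo^2 * (1-t0)^2" by (simp add: power_mult_distrib)
  also have "\<dots> = 1" unfolding k_sq xlo_sq using f0_1 f0_pos by (simp add: field_simps)
  finally have "(k*xlo*(1-t0))^2 = 1" .
  moreover have "0 < k*xlo*(1-t0)" using k_pos xlo_pos t0_lt1 by simp
  ultimately show ?thesis unfolding e using power2_eq_1_iff by fastforce
qed

lemma d_lt: "d < 3*(t1 - 1)"
proof -
  have "d = rD/a" by (rule d_eq)
  moreover have "t1 = (1 + a + 2*rD)/(3*a)" by (rule t1_eq)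
  ultimately have "a*(d+3) < a*(3*(t1-1)+3)" using a_pos rD_gt by (simp add: field_simps abs_less_iff)
  then show ?thesis using a_pos by simp
qed

lemma Wp_pos: assumes "xlo \<le> x" shows "0 < W' x"
proof -
  have "xlo^2 \<le> x^2" using assms xlo_pos by (simp add: power_mono)
  then have "d < 3*x^2" using d_lt xlo_sq by simp
  then show ?thesis unfolding W'_def using k_pos by simp
qed

lemma ff_sub: "ff (t1 - x^2) = f0 * (1 - (W x)^2)"
proof -
  have "ff (t1 - x^2) = f0 + a*(t1 - x^2 - t0)^2*(t1 - x^2 - t1)" using ff_poly[of "t1 - x^2"] by simp
  also have "\<dots> = f0 - a*x^2*(x^2-d)^2" unfolding d_def by (simp add: power2_eq_square algebra_simps)
  also have "\<dots> = f0 * (1 - (W x)^2)" unfolding W_def power_mult_distrib k_sq using f0_pos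
    by (simp add: field_simps)
  finally show ?thesis .
qed

lemma ff_nonneg: "0 \<le> t \<Longrightarrow> t \<le> 1 \<Longrightarrow> 0 \<le> ff t"
proof -
  assume t: "0 \<le> t" "t \<le> 1"
  have "a*t \<le> 1*1" using a_lt1 a_pos t by (intro mult_mono) auto
  then show ?thesis unfolding ff_def using t by simp
qed

lemma W_bound: assumes "x \<in> {xlo..xhi}" shows "\<bar>W x\<bar> \<le> 1"
proof -
  have "xlo^2 \<le> x^2" "x^2 \<le> xhi^2" using assms xlo_pos by (auto intro: power_mono)
  then have "0 \<le> t1 - x^2" "t1 - x^2 \<le> 1" using xlo_sq xhi_sq by auto
  then have "0 \<le> f0 * (1 - (W x)^2)" using ff_nonneg ff_sub by metis
  then have "(W x)^2 \<le> 1" using f0_pos by (simp add: zero_le_mult_iff)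
  then show ?thesis by (simp add: abs_square_le_1)
qed

lemma decomp: assumes "0 < x" "0 < W' x"
  shows "2*x = (c0 + c1*W x)*W' x + (W x)^2*W' x*Q x"
proof -
  have dd: "d = \<sigma>^2" using sig_sq by simp
  have wp: "k*(3*x^2-\<sigma>^2) \<noteq> 0" using assms(2) unfolding W'_def dd by (metis less_irrefl)
  show ?thesis
    unfolding c0_def c1_def Q_def W_def W'_def dd
    by (rule decomp_alg[OF sig_pos k_pos assms(1) wp])
qed

end

context lap begin

definition "N r = integral {0..1} (\<lambda>t. ff t ^ r)"

lemma ff_cont: "continuous_on S (\<lambda>t. ff t ^ r)"
  unfolding ff_def by (intro continuous_intros)

lemma xlo_le_xhi: "xlo \<le> xhi" unfolding xlo_def xhi_def by simp

lemma N_sub: "((\<lambda>x. 2*x * ff (t1 - x^2)^r) has_integral N r) {xlo..xhi}"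
proof -
  have im: "(\<lambda>x. t1 - x^2) ` {xlo..xhi} \<subseteq> {0..1}"
  proof
    fix y assume "y \<in> (\<lambda>x. t1 - x^2) ` {xlo..xhi}"
    then obtain x where x: "x \<in> {xlo..xhi}" "y = t1 - x^2" by auto
    have "xlo^2 \<le> x^2" "x^2 \<le> xhi^2" using x xlo_pos by (auto intro: power_mono)
    then show "y \<in> {0..1}" using x xlo_sq xhi_sq by auto
  qed
  have gc: "continuous_on {xlo..xhi} (\<lambda>x. t1 - x^2)" by (intro continuous_intros)
  have de: "\<And>x. x \<in> {xlo..xhi} \<Longrightarrow> ((\<lambda>x. t1 - x^2) has_field_derivative (-2*x)) (at x within {xlo..xhi})"
    by (rule derivative_eq_intros refl | simp)+
  have "((\<lambda>x. (-2*x) *\<^sub>R ff (t1 - x^2)^r) has_integral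
     (integral {t1 - xlo^2..t1 - xhi^2} (\<lambda>t. ff t ^ r) - integral {t1 - xhi^2..t1 - xlo^2} (\<lambda>t. ff t ^ r))) {xlo..xhi}"
    apply (rule has_integral_substitution_general[where s="{}", OF _ xlo_le_xhi im ff_cont gc])
    using de by auto
  then have "((\<lambda>x. (-2*x) * ff (t1 - x^2)^r) has_integral (- N r)) {xlo..xhi}"
    unfolding xlo_sq xhi_sq N_def using t1_gt1 by simp
  from has_integral_neg[OF this] show ?thesis by simp
qed

lemma W_deriv: "(W has_field_derivative W' x) (at x within S)"
  unfolding W_def W'_def by (rule derivative_eq_intros refl | simp)+ (simp add: algebra_simps power2_eq_square)

lemma W_cont [continuous_intros]: "continuous_on S W"
  unfolding W_def[abs_def] by (intro continuous_intros)

lemma Wp_cont [continuous_intros]: "continuous_on S W'"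
  unfolding W'_def[abs_def] by (intro continuous_intros)

lemma W_im: "W ` {xlo..xhi} \<subseteq> {-1..1}"
  using W_bound by (force simp: abs_le_iff)

lemma sub_W:
  fixes F :: "real \<Rightarrow> real"
  assumes "continuous_on {-1..1} F"
  shows "((\<lambda>x. W' x *\<^sub>R F (W x)) has_integral integral {-1..1} F) {xlo..xhi}"
  using has_integral_substitution[OF xlo_le_xhi _ W_im assms, of W'] W_deriv W_slo W_shi
  by simp

lemma main_int: "((\<lambda>v::real. (1-v^2)^r * (c0 + c1 * v)) has_integral c0 * Iint r) {-1..1}"
proof -
  have "((\<lambda>v::real. c0 * (1-v^2)^r + c1 * ((1-v^2)^r * v)) has_integral (c0 * Iint r + c1 * 0)) {-1..1}"
    by (intro has_integral_add has_integral_mult_right I_has odd_int)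
  then show ?thesis by (simp add: algebra_simps)
qed

lemma Q_cont [continuous_intros]: "continuous_on {xlo..xhi} Q"
proof -
  have "\<forall>x\<in>{xlo..xhi}. \<sigma>^4*k^2*x^2*(x+\<sigma>)^2*W' x \<noteq> 0"
  proof
    fix x assume x: "x \<in> {xlo..xhi}"
    then have "0 < W' x" "0 < x" using Wp_pos xlo_pos by auto
    then show "\<sigma>^4*k^2*x^2*(x+\<sigma>)^2*W' x \<noteq> 0" using sig_pos k_pos by simp
  qed
  then show ?thesis unfolding Q_def[abs_def]
    by (intro continuous_intros) auto
qed

lemma Q_bound: obtains M where "\<And>x. x \<in> {xlo..xhi} \<Longrightarrow> \<bar>Q x\<bar> \<le> M"
proof -
  have "compact (Q ` {xlo..xhi})" by (intro compact_continuous_image Q_cont compact_Icc)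
  then have "bounded (Q ` {xlo..xhi})" by (rule compact_imp_bounded)
  then obtain M where M: "\<And>y. y \<in> Q ` {xlo..xhi} \<Longrightarrow> norm y \<le> M" unfolding bounded_iff by blast
  have "\<And>x. x \<in> {xlo..xhi} \<Longrightarrow> \<bar>Q x\<bar> \<le> M" using M[OF imageI] by simp
  then show ?thesis by (rule that)
qed

definition "E2 r = integral {xlo..xhi} (\<lambda>x. (1-(W x)^2)^r * ((W x)^2 * W' x * Q x))"

lemma N_decomp: "N r = f0^r * (c0 * Iint r + E2 r)"
proof -
  have A: "((\<lambda>x. W' x *\<^sub>R ((1-(W x)^2)^r * (c0 + c1*W x))) has_integral c0 * Iint r) {xlo..xhi}"
    using sub_W[of "\<lambda>v. (1-v^2)^r * (c0 + c1 * v)"] integral_unique[OF main_int]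
    by (simp add: continuous_intros)
  have Bi: "(\<lambda>x. (1-(W x)^2)^r * ((W x)^2 * W' x * Q x)) integrable_on {xlo..xhi}"
  proof (rule integrable_continuous_real)
    show "continuous_on {xlo..xhi} (\<lambda>x. (1-(W x)^2)^r * ((W x)^2 * W' x * Q x))"
      by (intro continuous_intros)
  qed
  have B: "((\<lambda>x. (1-(W x)^2)^r * ((W x)^2 * W' x * Q x)) has_integral E2 r) {xlo..xhi}"
    unfolding E2_def using Bi by (rule integrable_integral)
  have AB: "((\<lambda>x. f0^r * (W' x *\<^sub>R ((1-(W x)^2)^r * (c0 + c1*W x)) + (1-(W x)^2)^r * ((W x)^2 * W' x * Q x)))
     has_integral f0^r * (c0 * Iint r + E2 r)) {xlo..xhi}"
    by (intro has_integral_mult_right has_integral_add A B)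
  have eq: "f0^r * (W' x *\<^sub>R ((1-(W x)^2)^r * (c0 + c1*W x)) + (1-(W x)^2)^r * ((W x)^2 * W' x * Q x))
     = 2*x * ff (t1 - x^2)^r" if "x \<in> {xlo..xhi}" for x
  proof -
    have x: "0 < x" "0 < W' x" using that xlo_pos Wp_pos by auto
    have h1: "ff (t1 - x^2)^r = f0^r * (1 - (W x)^2)^r" by (simp only: ff_sub power_mult_distrib)
    show ?thesis unfolding h1 decomp[OF x] by (simp add: algebra_simps)
  qed
  have "((\<lambda>x. 2*x * ff (t1 - x^2)^r) has_integral f0^r * (c0 * Iint r + E2 r)) {xlo..xhi}"
    using has_integral_spike_finite[OF _ _ AB, of "{}"] eq by auto
  then show ?thesis using N_sub has_integral_unique by blast
qed

lemma E2_bound: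
  assumes M: "\<And>x. x \<in> {xlo..xhi} \<Longrightarrow> \<bar>Q x\<bar> \<le> M"
  shows "\<bar>E2 r\<bar> \<le> M * Jint r"
proof -
  have Bi: "(\<lambda>x. (1-(W x)^2)^r * ((W x)^2 * W' x * Q x)) integrable_on {xlo..xhi}"
  proof (rule integrable_continuous_real)
    show "continuous_on {xlo..xhi} (\<lambda>x. (1-(W x)^2)^r * ((W x)^2 * W' x * Q x))"
      by (intro continuous_intros)
  qed
  have J: "((\<lambda>x. W' x *\<^sub>R ((W x)^2 * (1-(W x)^2)^r)) has_integral Jint r) {xlo..xhi}"
    using sub_W[of "\<lambda>v. v^2 * (1-v^2)^r"] unfolding Jint_def by (simp add: continuous_intros)
  have MJ: "((\<lambda>x. M * (W' x * ((W x)^2 * (1-(W x)^2)^r))) has_integral M * Jint r) {xlo..xhi}"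
    using has_integral_mult_right[OF J, of M] by simp
  have "norm (integral {xlo..xhi} (\<lambda>x. (1-(W x)^2)^r * ((W x)^2 * W' x * Q x)))
      \<le> integral {xlo..xhi} (\<lambda>x. M * (W' x * ((W x)^2 * (1-(W x)^2)^r)))"
  proof (rule integral_norm_bound_integral[OF Bi])
    show "(\<lambda>x. M * (W' x * ((W x)^2 * (1-(W x)^2)^r))) integrable_on {xlo..xhi}"
      using MJ by blast
  next
    fix x assume x: "x \<in> {xlo..xhi}"
    have p1: "0 \<le> (1-(W x)^2)^r" using W_bound[OF x] by (simp add: abs_square_le_1)
    have p2: "0 < W' x" using Wp_pos x by auto
    have "norm ((1-(W x)^2)^r * ((W x)^2 * W' x * Q x)) = (1-(W x)^2)^r * (W x)^2 * W' x * \<bar>Q x\<bar>"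
      using p1 p2 by (simp add: abs_mult)
    also have "\<dots> \<le> (1-(W x)^2)^r * (W x)^2 * W' x * M"
      using p1 p2 M[OF x] by (intro mult_left_mono) auto
    finally show "norm ((1-(W x)^2)^r * ((W x)^2 * W' x * Q x)) \<le> M * (W' x * ((W x)^2 * (1-(W x)^2)^r))"
      by (simp add: algebra_simps)
  qed
  from this integral_unique[OF MJ] show ?thesis unfolding E2_def real_norm_def by linarith
qed

end

context lap begin

lemma c0_pos: "0 < c0" unfolding c0_def using k_pos sig_pos by simp

lemma h_eq: "h r z = fact (2*r+1) / (fact r)^2 * N r"
  unfolding h_def hyp_integral N_def ff_def a_def ..

lemma P_eq: "fact (2*r+1) / (fact r)^2 = 2*4^r / Iint r"
  using I_pos[of r] unfolding I_formula by (simp add: field_simps)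

lemma h_form: "h r z = (4*f0)^r * (2*c0) * (1 + E2 r / (c0 * Iint r))"
proof -
  have "h r z = 2*4^r / Iint r * (f0^r * (c0 * Iint r + E2 r))"
    unfolding h_eq P_eq N_decomp ..
  also have "\<dots> = (4*f0)^r * (2*c0) * (1 + E2 r / (c0 * Iint r))"
    using I_pos[of r] c0_pos by (simp add: field_simps power_mult_distrib)
  finally show ?thesis .
qed

lemma f0e: "27*a^2*f0 = (2*a-1)*(1+a)*(2-a) + 2*Dl*rD"
  unfolding f0_def ff_def t0_def using a_pos rD_sq unfolding Dl_def
  by (simp add: field_simps power2_eq_square power3_eq_cube) algebra

lemma Dz: "1 - z + z^2 = Dl" unfolding Dl_def a_def by (simp add: power2_eq_square algebra_simps)

lemma rho_eq: "rho z = 4 * f0"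
proof -
  have pw: "Dl powr (3/2) = Dl * rD"
  proof -
    have "Dl powr (3/2) = Dl powr (1 + 1/2)" by simp
    also have "\<dots> = Dl powr 1 * Dl powr (1/2)" by (rule powr_add)
    also have "\<dots> = Dl * rD" unfolding rD_def using Dl_pos by (simp add: powr_half_sqrt)
    finally show ?thesis .
  qed
  have e1: "1 - 2*z = 2*a - 1" "2 - z = 1 + a" "1 + z = 2 - a" "1 - z = a" unfolding a_def by simp_all
  have "rho z = 4 * ((2*a-1)*(1+a)*(2-a) + 2*Dl*rD) / (27*a^2)"
    unfolding rho_def Dz pw unfolding e1 by (simp add: algebra_simps)
  also have "\<dots> = 4 * f0" unfolding f0e[symmetric] using a_pos by simp
  finally show ?thesis .
qed

lemma C_eq: "Cconst z = 2 * c0"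
proof -
  define X where "X = 2*Dl^2 - (2-z)*(1-2*z)*(1+z)*rD"
  have CX: "Cconst z = 2*z / sqrt X" unfolding Cconst_def X_def Dz rD_def ..
  have z: "z = 1 - a" unfolding a_def by simp
  have e1: "1 - 2*z = 2*a - 1" "2 - z = 1 + a" "1 + z = 2 - a" unfolding a_def by simp_all
  have "27*a^2*(f0*X) = (27*a^2*f0)*X" by simp
  also have "\<dots> = ((2*a-1)*(1+a)*(2-a) + 2*Dl*rD) * X" unfolding f0e ..
  also have "\<dots> = 27*a^2*(z^2*rD)"
    unfolding X_def e1 using rD_sq z unfolding Dl_def by algebra
  finally have "f0*X = z^2*rD" using a_pos by simp
  then have Xe: "X = z^2 * (rD/f0)" using f0_pos by (simp add: field_simps)
  have sX: "sqrt X = z * sqrt (rD/f0)" unfolding Xe real_sqrt_mult using z0 by simp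
  have ks: "k*\<sigma> = sqrt (rD/f0)"
    unfolding k_def \<sigma>_def d_eq using a_pos f0_pos by (simp add: real_sqrt_mult[symmetric] field_simps)
  show ?thesis unfolding CX sX c0_def ks using z0 by simp
qed

end

theorem mainTheorem3:
  fixes z :: real
  assumes "0 < z" and "z < 1"
  shows "\<exists>g :: nat \<Rightarrow> real. g \<in> O[sequentially](\<lambda>r. 1 / real r) \<and>
           (\<forall>\<^sub>F r in sequentially. h r z = rho z ^ r * Cconst z * (1 + g r))"
proof -
  interpret lap z using assms by unfold_locales
  obtain M where M: "\<And>x. x \<in> {xlo..xhi} \<Longrightarrow> \<bar>Q x\<bar> \<le> M" using Q_bound by blast
  define g where "g r = E2 r / (c0 * Iint r)" for r
  show ?thesis
  proof (intro exI conjI)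
    show "\<forall>\<^sub>F r in sequentially. h r z = rho z ^ r * Cconst z * (1 + g r)"
      by (intro always_eventually allI) (simp add: h_form rho_eq C_eq g_def)
    show "g \<in> O[sequentially](\<lambda>r. 1 / real r)"
    proof (rule bigoI)
      show "\<forall>\<^sub>F r in sequentially. norm (g r) \<le> (\<bar>M\<bar>/c0) * norm (1 / real r)"
      proof (rule eventually_sequentiallyI[of 1])
        fix r :: nat assume r: "1 \<le> r"
        have Ip: "0 < Iint r" by (rule I_pos)
        have "\<bar>g r\<bar> = \<bar>E2 r\<bar> / (c0 * Iint r)" unfolding g_def using Ip c0_pos by (simp add: abs_mult)
        also have "\<dots> \<le> M * Jint r / (c0 * Iint r)"
          using E2_bound[OF M] Ip c0_pos by (intro divide_right_mono) auto
        also have "M * Jint r = M * (Iint r / (2*real r+3))" using IJ[of r] by simp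
        also have "M * (Iint r / (2*real r+3)) / (c0 * Iint r) = M / (c0 * (2*real r+3))"
        proof -
          have g: "\<And>D::real. 0 < D \<Longrightarrow> M * (Iint r / D) / (c0 * Iint r) = M / (c0 * D)"
            using Ip c0_pos by (simp add: field_simps)
          show ?thesis by (rule g) simp
        qed
        also have "\<dots> \<le> \<bar>M\<bar> / (c0 * real r)"
        proof -
          have "M / (c0 * (2*real r+3)) \<le> \<bar>M\<bar> / (c0 * (2*real r+3))"
            using c0_pos by (intro divide_right_mono) auto
          also have "\<dots> \<le> \<bar>M\<bar> / (c0 * real r)"
            using c0_pos r by (intro divide_left_mono mult_left_mono mult_pos_pos) auto
          finally show ?thesis .
        qed
        also have "\<dots> = (\<bar>M\<bar>/c0) * norm (1 / real r)" using r by simp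
        finally show "norm (g r) \<le> (\<bar>M\<bar>/c0) * norm (1 / real r)" by simp
      qed
    qed
  qed
qed

end
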